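(* Let $K\ge 2$, let $\bm{\ell}\in\mathbb{R}^K$ be a logit vector, and let $\hat{\bm{\sigma}}=\mathrm{softmax}(\bm{\ell})\in(0,1)^K$, i.e. $\hat{\bm{\sigma}}_i=\exp(\bm{\ell}_i)/\sum_{k=1}^K\exp(\bm{\ell}_k)$. Define the logit distance vector $\bm{d}\in\mathbb{R}^K$ by $\bm{d}_k=\max_{1\le i\le K}\bm{\ell}_i-\bm{\ell}_k$, and let ${\bm{u}}=(1/K,\dots,1/K)$ be the uniform distribution on $K$ classes. Then $$\mathrm{KL}[{\bm{u}}\,\|\,\hat{\bm{\sigma}}]\;\le\;\frac{1}{K}\sum_{i=1}^K\bm{d}_i\;\le\;\mathrm{KL}[{\bm{u}}\,\|\,\hat{\bm{\sigma}}]+\log K,$$ equivalently, writing $\mathcal{C}=-\frac{1}{K}\sum_{k=1}^K\log\hat{\bm{\sigma}}_k=\mathrm{KL}[{\bm{u}}\|\hat{\bm{\sigma}}]+\log K$, one has $\mathcal{C}-\log K\le \frac1K\sum_i\bm{d}_i\le \mathcal{C}$.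
   Context: $\mathrm{KL}[{\bm{u}}\|\hat{\bm{\sigma}}]=\sum_{k=1}^K u_k\log(u_k/\hat{\bm{\sigma}}_k)$ with natural logarithm. The logit-distance vector corresponds to a hard constraint $\bm{d}=\bm{0}$ (all logits equal), and $\frac1K\sum_i \bm{d}_i$ is the associated linear penalty. *)

theory Defs
  imports Complex_Main
begin

text \<open>Vectors in R^K are represented as functions nat => real on the index set {0..<K}.\<close>

definition softmax :: "nat \<Rightarrow> (nat \<Rightarrow> real) \<Rightarrow> nat \<Rightarrow> real" where
  "softmax K l i = exp (l i) / (\<Sum>k<K. exp (l k))"

definition logit_dist :: "nat \<Rightarrow> (nat \<Rightarrow> real) \<Rightarrow> nat \<Rightarrow> real" where
  "logit_dist K l k = Max (l ` {..<K}) - l k"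

definition uniform_dist :: "nat \<Rightarrow> nat \<Rightarrow> real" where
  "uniform_dist K k = 1 / real K"

definition KL :: "nat \<Rightarrow> (nat \<Rightarrow> real) \<Rightarrow> (nat \<Rightarrow> real) \<Rightarrow> real" where
  "KL K u s = (\<Sum>k<K. u k * ln (u k / s k))"

end

theory Submission
  imports Defs
begin

theorem proposition3p3:
  fixes K :: nat and l :: "nat \<Rightarrow> real"
  assumes "K \<ge> 2"
  shows "KL K (uniform_dist K) (softmax K l)
           \<le> (1 / real K) * (\<Sum>i<K. logit_dist K l i)
       \<and> (1 / real K) * (\<Sum>i<K. logit_dist K l i)
           \<le> KL K (uniform_dist K) (softmax K l) + ln (real K)"
proof -
  define S where "S = (\<Sum>k<K. exp (l k))"
  define M where "M = Max (l ` {..<K})"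
  define L where "L = (\<Sum>k<K. l k)"
  have Kpos: "real K > 0" using assms by simp
  have ne: "{..<K} \<noteq> {}" using assms by (simp add: lessThan_empty_iff)
  have Spos: "S > 0" unfolding S_def using ne by (intro sum_pos) auto
  have trm: "uniform_dist K k * ln (uniform_dist K k / softmax K l k)
      = (1 / real K) * (ln S - ln (real K) - l k)" for k
  proof -
    have "uniform_dist K k / softmax K l k = S / (real K * exp (l k))"
      unfolding uniform_dist_def softmax_def S_def[symmetric] by (simp add: field_simps)
    also have "ln \<dots> = ln S - ln (real K) - l k"
      using Spos Kpos by (simp add: ln_div ln_mult)
    finally show ?thesis by (simp add: uniform_dist_def)
  qed
  have KLeq: "KL K (uniform_dist K) (softmax K l) = ln S - ln (real K) - L / real K"
  proof -
    have "KL K (uniform_dist K) (softmax K l) = (1 / real K) * (\<Sum>k<K. ln S - ln (real K) - l k)"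
      unfolding KL_def trm by (simp add: sum_distrib_left)
    also have "(\<Sum>k<K. ln S - ln (real K) - l k) = real K * (ln S - ln (real K)) - L"
      unfolding L_def by (simp add: sum_subtractf)
    finally show ?thesis using Kpos by (simp add: field_simps)
  qed
  have Deq: "(1 / real K) * (\<Sum>i<K. logit_dist K l i) = M - L / real K"
  proof -
    have "(\<Sum>i<K. logit_dist K l i) = real K * M - L"
      unfolding logit_dist_def M_def[symmetric] L_def by (simp add: sum_subtractf)
    thus ?thesis using Kpos by (simp add: field_simps)
  qed
  have Mmem: "M \<in> l ` {..<K}" unfolding M_def using ne by (intro Max_in) auto
  then obtain j where j: "j < K" "M = l j" by auto
  have le: "l k \<le> M" if "k < K" for k unfolding M_def using that by (intro Max_ge) auto
  have "exp M \<le> S" unfolding S_def j(2)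
    using j(1) by (intro member_le_sum) auto
  hence h1: "M \<le> ln S" using Spos by (metis ln_exp ln_mono exp_gt_zero)
  have "S \<le> (\<Sum>k<K. exp M)" unfolding S_def using le by (intro sum_mono) auto
  hence "S \<le> real K * exp M" by simp
  hence "ln S \<le> ln (real K * exp M)" using Spos by simp
  also have "\<dots> = ln (real K) + M" using Kpos by (simp add: ln_mult)
  finally have h2: "ln S \<le> ln (real K) + M" .
  show ?thesis unfolding KLeq Deq using h1 h2 by linarith
qed

end
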